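(* Let $U$ be any $d\times d$ unitary matrix. For $k=1,\dots,d$ let $s_k=\max\{\|M\|: M \text{ a submatrix of } U \text{ with } \#\mathrm{cols}(M)+\#\mathrm{rows}(M)=k+1\}$, where $\|M\|$ is the largest singular value, let $R_k=\left(\frac{1+s_k}{2}\right)^2$, and define $W=(s_1,s_2-s_1,\dots,s_d-s_{d-1})$ and $Q=(R_1,R_2-R_1,\dots,R_d-R_{d-1})$. Then $W\prec Q$; consequently $H_\alpha(W)\ge H_\alpha(Q)$ for every Rényi entropy $H_\alpha$ (in particular for the Shannon entropy).
   Context: For vectors $x,y$ of the same length, $x\prec y$ means $\sum_{k=1}^n x^{\downarrow}_k\le\sum_{k=1}^n y^{\downarrow}_k$ for all $n$, with equality of total sums, where $x^{\downarrow}$ is $x$ sorted in decreasing order. The Rényi entropy of order $\alpha\neq1$ is $H_\alpha(x)=\frac{1}{1-\alpha}\ln\sum_i x_i^\alpha$, and $H_1$ is the Shannon entropy $-\sum_i x_i\ln x_i$. A submatrix is obtained by selecting a nonempty set of rows and a nonempty set of columns. *)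

theory Defs
  imports "HOL-Analysis.Analysis"
begin

text \<open>A d x d complex matrix is represented as a function U :: nat => nat => complex,
  with only the entries U i j for i, j < d being relevant.\<close>

definition unitary_mat :: "nat \<Rightarrow> (nat \<Rightarrow> nat \<Rightarrow> complex) \<Rightarrow> bool" where
  "unitary_mat d U \<longleftrightarrow>
     (\<forall>i<d. \<forall>j<d. (\<Sum>k<d. cnj (U k i) * U k j) = (if i = j then 1 else 0))"

text \<open>Largest singular value (= operator norm w.r.t. Euclidean norms) of the submatrix of U
  with row index set R and column index set C.\<close>

definition submat_norm :: "(nat \<Rightarrow> nat \<Rightarrow> complex) \<Rightarrow> nat set \<Rightarrow> nat set \<Rightarrow> real" where
  "submat_norm U R C =
     Sup {sqrt (\<Sum>i\<in>R. (cmod (\<Sum>j\<in>C. U i j * v j))\<^sup>2) | v.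
            (\<Sum>j\<in>C. (cmod (v j))\<^sup>2) \<le> 1}"

definition s_val :: "nat \<Rightarrow> (nat \<Rightarrow> nat \<Rightarrow> complex) \<Rightarrow> nat \<Rightarrow> real" where
  "s_val d U k = Max {submat_norm U R C | R C.
      R \<subseteq> {..<d} \<and> C \<subseteq> {..<d} \<and> R \<noteq> {} \<and> C \<noteq> {} \<and> card R + card C = k + 1}"

definition R_val :: "nat \<Rightarrow> (nat \<Rightarrow> nat \<Rightarrow> complex) \<Rightarrow> nat \<Rightarrow> real" where
  "R_val d U k = ((1 + s_val d U k) / 2)\<^sup>2"

definition incr_vec :: "nat \<Rightarrow> (nat \<Rightarrow> real) \<Rightarrow> real list" where
  "incr_vec d f = map (\<lambda>k. if k = 0 then f 1 else f (k + 1) - f k) [0..<d]"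

definition majorized :: "real list \<Rightarrow> real list \<Rightarrow> bool" where
  "majorized x y \<longleftrightarrow> length x = length y \<and>
     (\<forall>n. sum_list (take n (rev (sort x))) \<le> sum_list (take n (rev (sort y)))) \<and>
     sum_list x = sum_list y"

definition shannon :: "real list \<Rightarrow> real" where
  "shannon x = - sum_list (map (\<lambda>t. t * ln t) x)"

definition renyi :: "real \<Rightarrow> real list \<Rightarrow> real" where
  "renyi a x = (if a = 1 then shannon x
                else (1 / (1 - a)) * ln (sum_list (map (\<lambda>t. t powr a) x)))"

end

theory Submission
  imports Defs "HOL-Combinatorics.Permutations"
begin


lemma unitary_iso:
  assumes "unitary_mat d U"
  shows "(\<Sum>i<d. (cmod (\<Sum>j<d. U i j * w j))\<^sup>2) = (\<Sum>j<d. (cmod (w j))\<^sup>2)"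
proof -
  have "complex_of_real (\<Sum>i<d. (cmod (\<Sum>j<d. U i j * w j))\<^sup>2)
      = (\<Sum>i<d. (\<Sum>k<d. U i k * w k) * (\<Sum>j<d. cnj (U i j) * cnj (w j)))"
    by (simp only: of_real_sum complex_norm_square cnj_sum complex_cnj_mult)
  also have "\<dots> = (\<Sum>i<d. \<Sum>k<d. \<Sum>j<d. cnj (w j) * w k * (cnj (U i j) * U i k))"
    by (simp only: sum_product) (simp add: ac_simps)
  also have "\<dots> = (\<Sum>i<d. \<Sum>j<d. \<Sum>k<d. cnj (w j) * w k * (cnj (U i j) * U i k))"
    by (rule sum.cong[OF refl], rule sum.swap)
  also have "\<dots> = (\<Sum>j<d. \<Sum>i<d. \<Sum>k<d. cnj (w j) * w k * (cnj (U i j) * U i k))"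
    by (rule sum.swap)
  also have "\<dots> = (\<Sum>j<d. \<Sum>k<d. \<Sum>i<d. cnj (w j) * w k * (cnj (U i j) * U i k))"
    by (rule sum.cong[OF refl], rule sum.swap)
  also have "\<dots> = (\<Sum>j<d. \<Sum>k<d. cnj (w j) * w k * (\<Sum>i<d. cnj (U i j) * U i k))"
    by (simp only: sum_distrib_left)
  also have "\<dots> = (\<Sum>j<d. \<Sum>k<d. if j = k then cnj (w j) * w k else 0)"
    using assms unfolding unitary_mat_def by (intro sum.cong refl) auto
  also have "\<dots> = (\<Sum>j<d. w j * cnj (w j))"
    by (simp add: mult.commute)
  also have "\<dots> = complex_of_real (\<Sum>j<d. (cmod (w j))\<^sup>2)"
    by (simp only: of_real_sum complex_norm_square)
  finally show ?thesis using of_real_eq_iff by blast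
qed



definition nv :: "(nat \<Rightarrow> nat \<Rightarrow> complex) \<Rightarrow> nat set \<Rightarrow> nat set \<Rightarrow> (nat \<Rightarrow> complex) \<Rightarrow> real" where
  "nv U R C v = sqrt (\<Sum>i\<in>R. (cmod (\<Sum>j\<in>C. U i j * v j))\<^sup>2)"

lemma nv_nonneg: "nv U R C v \<ge> 0"
  unfolding nv_def by (simp add: sum_nonneg)

lemma nv_le_1:
  assumes U: "unitary_mat d U" and R: "R \<subseteq> {..<d}" and C: "C \<subseteq> {..<d}"
    and v: "(\<Sum>j\<in>C. (cmod (v j))\<^sup>2) \<le> 1"
  shows "nv U R C v \<le> 1"
proof -
  define w where "w j = (if j \<in> C then v j else 0)" for j
  have fC: "finite C" using C finite_subset by blast
  have eq: "(\<Sum>j\<in>C. U i j * v j) = (\<Sum>j<d. U i j * w j)" for i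
  proof -
    have "(\<Sum>j<d. U i j * w j) = (\<Sum>j\<in>C. U i j * w j)"
      by (rule sum.mono_neutral_right) (use C w_def in auto)
    also have "\<dots> = (\<Sum>j\<in>C. U i j * v j)" by (simp add: w_def)
    finally show ?thesis by simp
  qed
  have "(\<Sum>i\<in>R. (cmod (\<Sum>j\<in>C. U i j * v j))\<^sup>2) \<le> (\<Sum>i<d. (cmod (\<Sum>j<d. U i j * w j))\<^sup>2)"
    unfolding eq by (rule sum_mono2) (use R in auto)
  also have "\<dots> = (\<Sum>j<d. (cmod (w j))\<^sup>2)" by (rule unitary_iso[OF U])
  also have "\<dots> = (\<Sum>j\<in>C. (cmod (w j))\<^sup>2)"
    by (rule sum.mono_neutral_right) (use C w_def fC in auto)
  also have "\<dots> = (\<Sum>j\<in>C. (cmod (v j))\<^sup>2)" by (simp add: w_def)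
  finally show ?thesis unfolding nv_def using v by simp
qed

lemma submat_norm_alt:
  "submat_norm U R C = Sup {nv U R C v | v. (\<Sum>j\<in>C. (cmod (v j))\<^sup>2) \<le> 1}"
  unfolding submat_norm_def nv_def by simp

lemma sn_ge:
  assumes U: "unitary_mat d U" and R: "R \<subseteq> {..<d}" and C: "C \<subseteq> {..<d}"
    and v: "(\<Sum>j\<in>C. (cmod (v j))\<^sup>2) \<le> 1"
  shows "nv U R C v \<le> submat_norm U R C"
  unfolding submat_norm_alt
  by (rule cSup_upper) (use nv_le_1[OF U R C] v in \<open>auto intro!: bdd_aboveI[of _ 1]\<close>)

lemma sn_le:
  assumes "\<And>v. (\<Sum>j\<in>C. (cmod (v j))\<^sup>2) \<le> 1 \<Longrightarrow> nv U R C v \<le> B"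
  shows "submat_norm U R C \<le> B"
  unfolding submat_norm_alt
  by (rule cSup_least) (use assms in \<open>auto intro!: exI[of _ "\<lambda>_. 0"]\<close>)

lemma sn_le1:
  assumes U: "unitary_mat d U" and R: "R \<subseteq> {..<d}" and C: "C \<subseteq> {..<d}"
  shows "submat_norm U R C \<le> 1"
  by (rule sn_le, rule nv_le_1[OF U R C])

lemma sn_nonneg:
  assumes U: "unitary_mat d U" and R: "R \<subseteq> {..<d}" and C: "C \<subseteq> {..<d}"
  shows "submat_norm U R C \<ge> 0"
proof -
  have "nv U R C (\<lambda>_. 0) \<le> submat_norm U R C" by (rule sn_ge[OF U R C]) simp
  thus ?thesis using nv_nonneg order_trans by blast
qed

definition SS where "SS d U k = {submat_norm U R C | R C.
      R \<subseteq> {..<d} \<and> C \<subseteq> {..<d} \<and> R \<noteq> {} \<and> C \<noteq> {} \<and> card R + card C = k + 1}"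

lemma SS_finite: "finite (SS d U k)"
proof -
  have "SS d U k \<subseteq> (\<lambda>(R,C). submat_norm U R C) ` (Pow {..<d} \<times> Pow {..<d})"
    unfolding SS_def by auto
  thus ?thesis by (rule finite_subset) auto
qed

lemma SS_ne:
  assumes "1 \<le> k" "k \<le> d" shows "SS d U k \<noteq> {}"
proof -
  have "{..<1} \<subseteq> {..<d} \<and> {..<k} \<subseteq> {..<d} \<and> {..<1::nat} \<noteq> {} \<and> {..<k} \<noteq> {} \<and> card {..<1::nat} + card {..<k} = k + 1"
    using assms by (auto simp: lessThan_empty_iff)
  hence "submat_norm U {..<1} {..<k} \<in> SS d U k"
    unfolding SS_def by blast
  thus ?thesis by auto
qed

lemma s_val_SS: "s_val d U k = Max (SS d U k)"
  unfolding s_val_def SS_def by simp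

lemma s_ge:
  assumes "R \<subseteq> {..<d}" "C \<subseteq> {..<d}" "R \<noteq> {}" "C \<noteq> {}" "card R + card C = k + 1"
  shows "submat_norm U R C \<le> s_val d U k"
  unfolding s_val_SS by (rule Max_ge[OF SS_finite]) (use assms in \<open>auto simp: SS_def\<close>)

lemma s_obtain:
  assumes "1 \<le> k" "k \<le> d"
  obtains R C where "R \<subseteq> {..<d}" "C \<subseteq> {..<d}" "R \<noteq> {}" "C \<noteq> {}" "card R + card C = k + 1"
    "s_val d U k = submat_norm U R C"
proof -
  have "Max (SS d U k) \<in> SS d U k" by (rule Max_in[OF SS_finite SS_ne[OF assms]])
  thus ?thesis using that unfolding s_val_SS SS_def by auto
qed

lemma s_le1:
  assumes U: "unitary_mat d U" and "1 \<le> k" "k \<le> d"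
  shows "s_val d U k \<le> 1"
  using s_obtain[OF assms(2,3)] sn_le1[OF U] by metis

lemma s_nonneg:
  assumes U: "unitary_mat d U" and "1 \<le> k" "k \<le> d"
  shows "s_val d U k \<ge> 0"
  using s_obtain[OF assms(2,3)] sn_nonneg[OF U] by metis



lemma s_top:
  assumes U: "unitary_mat d U" and d: "1 \<le> d"
  shows "s_val d U d = 1"
proof -
  have col: "(\<Sum>i<d. (cmod (U i 0))\<^sup>2) = 1"
  proof -
    have "(\<Sum>k<d. cnj (U k 0) * U k 0) = 1" using U d unfolding unitary_mat_def by auto
    hence "complex_of_real (\<Sum>i<d. (cmod (U i 0))\<^sup>2) = 1"
      by (simp only: of_real_sum complex_norm_square) (simp add: mult.commute)
    thus ?thesis by (metis of_real_eq_1_iff)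
  qed
  define v :: "nat \<Rightarrow> complex" where "v j = (if j = 0 then 1 else 0)" for j
  have "nv U {..<d} {0} v \<le> submat_norm U {..<d} {0}"
    by (rule sn_ge[OF U]) (use d v_def in auto)
  moreover have "nv U {..<d} {0} v = 1" unfolding nv_def v_def using col by simp
  moreover have "submat_norm U {..<d} {0} \<le> s_val d U d"
    by (rule s_ge) (use d in \<open>auto simp: lessThan_empty_iff\<close>)
  ultimately show ?thesis using s_le1[OF U _ order_refl] d by fastforce
qed

lemma entry_le:
  assumes U: "unitary_mat d U" and "i < d" "j < d"
  shows "cmod (U i j) \<le> s_val d U 1"
proof -
  have "nv U {i} {j} (\<lambda>_. 1) \<le> submat_norm U {i} {j}"
    by (rule sn_ge[OF U]) (use assms in auto)
  moreover have "nv U {i} {j} (\<lambda>_. 1) = cmod (U i j)" unfolding nv_def by simp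
  moreover have "submat_norm U {i} {j} \<le> s_val d U 1"
    by (rule s_ge) (use assms in auto)
  ultimately show ?thesis by simp
qed

lemma s_mono:
  assumes U: "unitary_mat d U" and k: "1 \<le> k" "k < d"
  shows "s_val d U k \<le> s_val d U (Suc k)"
proof -
  obtain R C where RC: "R \<subseteq> {..<d}" "C \<subseteq> {..<d}" "R \<noteq> {}" "C \<noteq> {}" "card R + card C = k + 1"
    and s: "s_val d U k = submat_norm U R C" using s_obtain[of k d U] k by auto
  have "card C \<ge> 1" using RC(2,4) by (meson card_0_eq finite_nat_iff_bounded less_one not_le)
  hence "card R < card {..<d}" using RC k by simp
  have fR: "finite R" using RC(1) finite_subset by blast
  have "\<not> {..<d} \<subseteq> R" 
  proof
    assume "{..<d} \<subseteq> R"
    hence "card {..<d} \<le> card R" by (rule card_mono[OF fR])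
    thus False using \<open>card R < card {..<d}\<close> by linarith
  qed
  then obtain i where i: "i \<in> {..<d}" "i \<notin> R" by blast
  have "submat_norm U R C \<le> submat_norm U (insert i R) C"
  proof (rule sn_le)
    fix v assume v: "(\<Sum>j\<in>C. (cmod (v j))\<^sup>2) \<le> 1"
    have "nv U R C v \<le> nv U (insert i R) C v"
      unfolding nv_def by (intro real_sqrt_le_mono sum_mono2) (use fR in auto)
    also have "\<dots> \<le> submat_norm U (insert i R) C"
      by (rule sn_ge[OF U]) (use RC i v in auto)
    finally show "nv U R C v \<le> submat_norm U (insert i R) C" .
  qed
  also have "\<dots> \<le> s_val d U (Suc k)"
    by (rule s_ge) (use RC i fR in auto)
  finally show ?thesis using s by simp
qed



lemma col_case:
  assumes fC: "finite C" and l: "l \<in> C" and card: "card R \<le> card C"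
    and ent: "\<And>i. i \<in> R \<Longrightarrow> cmod (U i l) \<le> e" and e: "e \<ge> 0"
    and v: "(\<Sum>j\<in>C. (cmod (v j))\<^sup>2) \<le> 1"
    and vmin: "\<And>j. j \<in> C \<Longrightarrow> cmod (v l) \<le> cmod (v j)"
  shows "nv U R C v \<le> nv U R (C - {l}) v + e"
proof -
  define a where "a i = (\<Sum>j\<in>C - {l}. U i j * v j)" for i
  define b where "b i = U i l * v l" for i
  have split: "(\<Sum>j\<in>C. U i j * v j) = a i + b i" for i
    unfolding a_def b_def using sum.remove[OF fC l, of "\<lambda>j. U i j * v j"] by (simp add: add.commute)
  have "nv U R C v = L2_set (\<lambda>i. cmod (a i + b i)) R"
    unfolding nv_def L2_set_def split by simp
  also have "\<dots> \<le> L2_set (\<lambda>i. cmod (a i) + cmod (b i)) R"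
    by (rule L2_set_mono) (auto simp: norm_triangle_ineq)
  also have "\<dots> \<le> L2_set (\<lambda>i. cmod (a i)) R + L2_set (\<lambda>i. cmod (b i)) R"
    by (rule L2_set_triangle_ineq)
  also have "L2_set (\<lambda>i. cmod (a i)) R = nv U R (C - {l}) v"
    unfolding nv_def L2_set_def a_def by simp
  also have "L2_set (\<lambda>i. cmod (b i)) R \<le> e"
  proof -
    have cl: "real (card C) * (cmod (v l))\<^sup>2 \<le> 1"
    proof -
      have "real (card C) * (cmod (v l))\<^sup>2 \<le> (\<Sum>j\<in>C. (cmod (v j))\<^sup>2)"
        by (rule sum_bounded_below) (use vmin in \<open>auto intro: power_mono\<close>)
      thus ?thesis using v by linarith
    qed
    have "(\<Sum>i\<in>R. (cmod (b i))\<^sup>2) \<le> (\<Sum>i\<in>R. e\<^sup>2 * (cmod (v l))\<^sup>2)"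
      unfolding b_def norm_mult power_mult_distrib
      by (intro sum_mono mult_right_mono power_mono) (use ent in auto)
    also have "\<dots> = real (card R) * (cmod (v l))\<^sup>2 * e\<^sup>2" by simp
    also have "\<dots> \<le> real (card C) * (cmod (v l))\<^sup>2 * e\<^sup>2"
      using card by (intro mult_right_mono) auto
    also have "\<dots> \<le> e\<^sup>2" using cl by (simp add: mult_left_le_one_le)
    finally show ?thesis unfolding L2_set_def using e by (simp add: real_le_lsqrt)
  qed
  finally show ?thesis by simp
qed

lemma row_case:
  assumes fR: "finite R" and fC: "finite C" and i0: "i0 \<in> R" and card: "card C \<le> card R"
    and ent: "\<And>i j. i \<in> R \<Longrightarrow> j \<in> C \<Longrightarrow> cmod (U i j) \<le> e" and e: "e \<ge> 0"
    and v: "(\<Sum>j\<in>C. (cmod (v j))\<^sup>2) \<le> 1"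
    and amin: "\<And>i. i \<in> R \<Longrightarrow> (cmod (\<Sum>j\<in>C. U i0 j * v j))\<^sup>2 \<le> (cmod (\<Sum>j\<in>C. U i j * v j))\<^sup>2"
  shows "nv U R C v \<le> nv U (R - {i0}) C v + e"
proof -
  define a where "a i = (cmod (\<Sum>j\<in>C. U i j * v j))\<^sup>2" for i
  define A where "A = (\<Sum>i\<in>R. a i)"
  define r where "r = real (card R)"
  have rpos: "r > 0" unfolding r_def using fR i0 card_gt_0_iff by auto
  have a0: "a i \<ge> 0" for i unfolding a_def by simp
  have Asplit: "A = a i0 + (\<Sum>i\<in>R - {i0}. a i)" unfolding A_def using sum.remove[OF fR i0] .
  have ra: "r * a i0 \<le> A" unfolding r_def A_def
    by (rule sum_bounded_below) (use amin a_def in auto)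
  have abound: "a i \<le> real (card C) * e\<^sup>2" if i: "i \<in> R" for i
  proof -
    have "cmod (\<Sum>j\<in>C. U i j * v j) \<le> (\<Sum>j\<in>C. cmod (U i j) * cmod (v j))"
      by (rule order_trans[OF norm_sum]) (simp add: norm_mult)
    hence "a i \<le> (\<Sum>j\<in>C. cmod (U i j) * cmod (v j))\<^sup>2"
      unfolding a_def by (intro power_mono) auto
    also have "\<dots> \<le> (\<Sum>j\<in>C. (cmod (U i j))\<^sup>2) * (\<Sum>j\<in>C. (cmod (v j))\<^sup>2)"
      by (rule Cauchy_Schwarz_ineq_sum)
    also have "\<dots> \<le> (\<Sum>j\<in>C. e\<^sup>2) * 1"
      by (intro mult_mono sum_mono power_mono) (use ent i v e in \<open>auto simp: sum_nonneg\<close>)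
    finally show ?thesis by simp
  qed
  have "A \<le> (\<Sum>i\<in>R. real (card C) * e\<^sup>2)" unfolding A_def by (rule sum_mono) (rule abound)
  also have "\<dots> = r * real (card C) * e\<^sup>2" unfolding r_def by simp
  also have "\<dots> \<le> r * r * e\<^sup>2" unfolding r_def using card by (intro mult_right_mono mult_left_mono) auto
  finally have Ab: "A \<le> (r * e)\<^sup>2" by (simp add: power2_eq_square algebra_simps)
  define x where "x = sqrt A"
  define y where "y = sqrt (A - a i0)"
  have A0: "A \<ge> 0" unfolding A_def by (simp add: sum_nonneg a0)
  have rest0: "A - a i0 \<ge> 0" using Asplit by (simp add: sum_nonneg a0)
  have ynv: "y = nv U (R - {i0}) C v" unfolding y_def nv_def using Asplit a_def by simp
  have xnv: "x = nv U R C v" unfolding x_def nv_def A_def a_def by simp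
  have x2: "x\<^sup>2 = A" unfolding x_def using A0 by simp
  have y2: "y\<^sup>2 = A - a i0" unfolding y_def using rest0 by simp
  have xre: "x \<le> r * e" unfolding x_def using Ab rpos e by (simp add: real_sqrt_le_iff real_le_lsqrt)
  have y0: "y \<ge> 0" unfolding y_def using rest0 by simp
  have yx: "y \<le> x" unfolding x_def y_def by (intro real_sqrt_le_mono) (use a0[of i0] in linarith)
  have "x \<le> y + e"
  proof (cases "x = 0")
    case True thus ?thesis using y0 e by simp
  next
    case False
    hence xp: "x > 0" unfolding x_def using A0 by simp
    have "x * (x - y) \<le> (x + y) * (x - y)" using yx y0 by (intro mult_right_mono) auto
    also have "\<dots> = a i0" using x2 y2 by (simp add: algebra_simps power2_eq_square)
    also have "a i0 \<le> x * e"
    proof -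
      have "r * a i0 \<le> x * x" using ra x2 by (simp add: power2_eq_square)
      also have "\<dots> \<le> x * (r * e)" using xre xp by (intro mult_left_mono) auto
      finally have "r * a i0 \<le> r * (x * e)" by (simp add: ac_simps)
      thus ?thesis using rpos by simp
    qed
    finally have "x * (x - y) \<le> x * e" .
    hence "x - y \<le> e" using xp by simp
    thus ?thesis by simp
  qed
  thus ?thesis using xnv ynv by simp
qed



lemma ex_min_real:
  fixes f :: "'a \<Rightarrow> real"
  assumes "finite A" "A \<noteq> {}"
  obtains x where "x \<in> A" "\<And>y. y \<in> A \<Longrightarrow> f x \<le> f y"
proof -
  have "Min (f ` A) \<in> f ` A" using assms by (intro Min_in) auto
  then obtain x where x: "x \<in> A" "f x = Min (f ` A)" by auto
  have "f x \<le> f y" if "y \<in> A" for y using x that assms by simp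
  thus ?thesis using that x by blast
qed

lemma s_step:
  assumes U: "unitary_mat d U" and k: "1 \<le> k" "k < d"
  shows "s_val d U (Suc k) \<le> s_val d U k + s_val d U 1"
proof -
  define e where "e = s_val d U 1"
  have e0: "e \<ge> 0" unfolding e_def using s_nonneg[OF U, of 1] k by simp
  obtain R C where RC: "R \<subseteq> {..<d}" "C \<subseteq> {..<d}" "R \<noteq> {}" "C \<noteq> {}" "card R + card C = Suc k + 1"
    and s: "s_val d U (Suc k) = submat_norm U R C" using s_obtain[of "Suc k" d U] k by auto
  have fR: "finite R" using RC(1) finite_subset by blast
  have fC: "finite C" using RC(2) finite_subset by blast
  have ent: "cmod (U i j) \<le> e" if "i \<in> R" "j \<in> C" for i j
    unfolding e_def by (rule entry_le[OF U]) (use RC that in auto)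
  have "submat_norm U R C \<le> s_val d U k + e"
  proof (rule sn_le)
    fix v assume v: "(\<Sum>j\<in>C. (cmod (v j))\<^sup>2) \<le> 1"
    show "nv U R C v \<le> s_val d U k + e"
    proof (cases "card R \<le> card C")
      case True
      obtain l where l: "l \<in> C" and lmin: "\<And>j. j \<in> C \<Longrightarrow> cmod (v l) \<le> cmod (v j)"
        using ex_min_real[OF fC RC(4), of "\<lambda>j. cmod (v j)"] by blast
      have cC: "card C \<ge> 2" using True RC(5) k by linarith
      have cC': "card (C - {l}) = card C - 1" using l fC by simp
      have ne: "C - {l} \<noteq> {}"
      proof
        assume h: "C - {l} = {}" have "card (C - {l}) = 0" by (simp only: h card.empty)
        thus False using cC cC' by linarith
      qed
      have "nv U R C v \<le> nv U R (C - {l}) v + e"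
        by (rule col_case[OF fC l True _ e0 v lmin]) (use ent l in auto)
      also have "nv U R (C - {l}) v \<le> submat_norm U R (C - {l})"
      proof (rule sn_ge[OF U RC(1)])
        show "C - {l} \<subseteq> {..<d}" using RC by auto
        have "(\<Sum>j\<in>C - {l}. (cmod (v j))\<^sup>2) \<le> (\<Sum>j\<in>C. (cmod (v j))\<^sup>2)"
          by (rule sum_mono2) (use fC in auto)
        thus "(\<Sum>j\<in>C - {l}. (cmod (v j))\<^sup>2) \<le> 1" using v by linarith
      qed
      also have "submat_norm U R (C - {l}) \<le> s_val d U k"
        by (rule s_ge) (use RC ne cC cC' in auto)
      finally show ?thesis by simp
    next
      case False
      define a where "a i = (cmod (\<Sum>j\<in>C. U i j * v j))\<^sup>2" for i
      obtain i0 where i0: "i0 \<in> R" and imin: "\<And>i. i \<in> R \<Longrightarrow> a i0 \<le> a i"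
        using ex_min_real[OF fR RC(3), of a] by blast
      have cR: "card R \<ge> 2" using False RC(5) k by linarith
      have cR': "card (R - {i0}) = card R - 1" using i0 fR by simp
      have ne: "R - {i0} \<noteq> {}"
      proof
        assume h: "R - {i0} = {}" have "card (R - {i0}) = 0" by (simp only: h card.empty)
        thus False using cR cR' by linarith
      qed
      have "nv U R C v \<le> nv U (R - {i0}) C v + e"
        by (rule row_case[OF fR fC i0 _ ent e0 v]) (use False imin a_def in auto)
      also have "nv U (R - {i0}) C v \<le> submat_norm U (R - {i0}) C"
        by (rule sn_ge[OF U _ RC(2) v]) (use RC in auto)
      also have "submat_norm U (R - {i0}) C \<le> s_val d U k"
        by (rule s_ge) (use RC ne cR cR' in auto)
      finally show ?thesis by simp
    qed
  qed
  thus ?thesis using s e_def by simp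
qed



lemma sum_take_nth: "m \<le> length w \<Longrightarrow> sum_list (take m w) = (\<Sum>i<m. w ! i)"
  by (simp add: sum_list_sum_nth atLeast0LessThan min_def)

lemma sorted_desc_top:
  fixes w :: "real list"
  assumes mono: "\<And>i j. i \<le> j \<Longrightarrow> j < length w \<Longrightarrow> w ! j \<le> w ! i"
    and K: "K \<subseteq> {..<length w}" and cK: "card K = m"
  shows "(\<Sum>i\<in>K. w ! i) \<le> (\<Sum>i<m. w ! i)"
proof (cases "m = 0")
  case True
  hence "K = {}" using cK K by (metis card_0_eq finite_lessThan finite_subset)
  thus ?thesis using True by simp
next
  case False
  have fK: "finite K" using K finite_subset by blast
  define M where "M = {..<m}"
  have mle: "m \<le> length w" using card_mono[OF _ K] cK by simp
  define A where "A = K - M"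
  define B where "B = M - K"
  have cA: "card A = card K - card (K \<inter> M)" unfolding A_def using fK by (simp add: card_Diff_subset_Int)
  have cB: "card B = card M - card (M \<inter> K)" unfolding B_def M_def by (simp add: card_Diff_subset_Int)
  have cAB: "card A = card B" using cA cB cK unfolding M_def by (simp add: Int_commute)
  have sK: "(\<Sum>i\<in>K. w ! i) = (\<Sum>i\<in>K \<inter> M. w ! i) + (\<Sum>i\<in>A. w ! i)"
    unfolding A_def using fK by (metis sum.Int_Diff)
  have sM: "(\<Sum>i\<in>M. w ! i) = (\<Sum>i\<in>K \<inter> M. w ! i) + (\<Sum>i\<in>B. w ! i)"
    unfolding B_def M_def by (metis finite_lessThan sum.Int_Diff Int_commute)
  have "(\<Sum>i\<in>A. w ! i) \<le> of_nat (card A) * w ! (m - 1)"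
    by (rule sum_bounded_above) (use K mono False in \<open>auto simp: A_def M_def\<close>)
  also have "\<dots> = of_nat (card B) * w ! (m - 1)" using cAB by simp
  also have "\<dots> \<le> (\<Sum>i\<in>B. w ! i)"
    by (rule sum_bounded_below) (use mono False mle in \<open>auto simp: B_def M_def\<close>)
  finally show ?thesis using sK sM unfolding M_def by linarith
qed

definition top :: "nat \<Rightarrow> real list \<Rightarrow> real" where
  "top m z = sum_list (take m (rev (sort z)))"

lemma top_perm:
  fixes z :: "real list"
  obtains p where "p permutes {..<length z}"
    "\<And>i. i < length z \<Longrightarrow> rev (sort z) ! i = z ! p i"
proof -
  have "mset (rev (sort z)) = mset z" by simp
  then obtain p where p: "p permutes {..<length z}" "permute_list p z = rev (sort z)"
    by (rule mset_eq_permutation)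
  thus ?thesis using that permute_list_nth[OF p(1)] by metis
qed

lemma rsort_mono:
  fixes z :: "real list"
  assumes "i \<le> j" "j < length z"
  shows "rev (sort z) ! j \<le> rev (sort z) ! i"
proof -
  have s: "sorted (sort z)" by simp
  have "rev (sort z) ! j = sort z ! (length z - Suc j)" using assms by (simp add: rev_nth)
  moreover have "rev (sort z) ! i = sort z ! (length z - Suc i)" using assms by (simp add: rev_nth)
  moreover have "sort z ! (length z - Suc j) \<le> sort z ! (length z - Suc i)"
    by (rule sorted_nth_mono[OF s]) (use assms in auto)
  ultimately show ?thesis by simp
qed

lemma top_ge:
  fixes z :: "real list"
  assumes I: "I \<subseteq> {..<length z}" and cI: "card I = m"
  shows "(\<Sum>i\<in>I. z ! i) \<le> top m z"
proof -
  obtain p where p: "p permutes {..<length z}" and pw: "\<And>i. i < length z \<Longrightarrow> rev (sort z) ! i = z ! p i"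
    using top_perm[of z] by blast
  define K where "K = {i \<in> {..<length z}. p i \<in> I}"
  have inj: "inj_on p K" using permutes_inj[OF p] inj_on_subset by blast
  have pK: "p ` K = I"
  proof
    show "p ` K \<subseteq> I" unfolding K_def by auto
    show "I \<subseteq> p ` K"
    proof
      fix x assume x: "x \<in> I"
      have "x \<in> p ` {..<length z}" using permutes_image[OF p] x I by auto
      then obtain i where "i < length z" "p i = x" by auto
      thus "x \<in> p ` K" unfolding K_def using x by auto
    qed
  qed
  have "(\<Sum>i\<in>I. z ! i) = (\<Sum>i\<in>K. z ! p i)" using sum.reindex[OF inj, of "\<lambda>i. z ! i"] pK by simp
  also have "\<dots> = (\<Sum>i\<in>K. rev (sort z) ! i)" using pw unfolding K_def by simp
  also have "\<dots> \<le> (\<Sum>i<m. rev (sort z) ! i)"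
  proof (rule sorted_desc_top)
    show "K \<subseteq> {..<length (rev (sort z))}" unfolding K_def by auto
    show "card K = m" using card_image[OF inj] pK cI by simp
  qed (use rsort_mono in auto)
  also have "\<dots> = top m z" unfolding top_def
  proof -
    have "m \<le> length z" using card_mono[OF _ I] cI by simp
    thus "(\<Sum>i<m. rev (sort z) ! i) = sum_list (take m (rev (sort z)))" by (simp add: sum_take_nth)
  qed
  finally show ?thesis .
qed

lemma top_attained:
  fixes z :: "real list"
  assumes m: "m \<le> length z"
  obtains I where "I \<subseteq> {..<length z}" "card I = m" "top m z = (\<Sum>i\<in>I. z ! i)"
proof -
  obtain p where p: "p permutes {..<length z}" and pw: "\<And>i. i < length z \<Longrightarrow> rev (sort z) ! i = z ! p i"
    using top_perm[of z] by blast
  have inj: "inj_on p {..<m}" using permutes_inj[OF p] inj_on_subset by blast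
  have "top m z = (\<Sum>i<m. rev (sort z) ! i)" unfolding top_def using m by (simp add: sum_take_nth)
  also have "\<dots> = (\<Sum>i<m. z ! p i)" using pw m by simp
  also have "\<dots> = (\<Sum>i\<in>p ` {..<m}. z ! i)" using sum.reindex[OF inj, of "\<lambda>i. z ! i"] by simp
  finally have "top m z = (\<Sum>i\<in>p ` {..<m}. z ! i)" .
  moreover have "p ` {..<m} \<subseteq> {..<length z}" using permutes_image[OF p] m by auto
  moreover have "card (p ` {..<m}) = m" using card_image[OF inj] by simp
  ultimately show ?thesis using that by blast
qed



definition struct :: "real list \<Rightarrow> real list \<Rightarrow> nat \<Rightarrow> bool" where
  "struct x y n \<longleftrightarrow> length x = n \<and> length y = n \<and> n \<ge> 1 \<and> (\<forall>k<n. 0 \<le> y ! k \<and> 0 \<le> x ! k) \<and>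
     (\<forall>k. 1 \<le> k \<and> k < n \<longrightarrow> y ! k \<le> x ! k \<and> x ! k \<le> x ! 0) \<and> sum_list x = sum_list y"

lemma struct_G:
  assumes st: "struct x y n" and J: "J \<subseteq> {..<n}" "0 \<in> J"
  shows "(\<Sum>i\<in>J. x ! i) \<le> (\<Sum>i\<in>J. y ! i)"
proof -
  have tot: "(\<Sum>i<n. x ! i) = (\<Sum>i<n. y ! i)"
    using st unfolding struct_def by (metis sum_list_sum_nth atLeast0LessThan)
  have fJ: "finite J" using J finite_subset by blast
  have sx: "(\<Sum>i<n. x ! i) = (\<Sum>i\<in>J. x ! i) + (\<Sum>i\<in>{..<n} - J. x ! i)"
    using sum.subset_diff[OF J(1) finite_lessThan] by (simp add: add.commute)
  have sy: "(\<Sum>i<n. y ! i) = (\<Sum>i\<in>J. y ! i) + (\<Sum>i\<in>{..<n} - J. y ! i)"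
    using sum.subset_diff[OF J(1) finite_lessThan] by (simp add: add.commute)
  have "(\<Sum>i\<in>{..<n} - J. y ! i) \<le> (\<Sum>i\<in>{..<n} - J. x ! i)"
  proof (rule sum_mono)
    fix i assume "i \<in> {..<n} - J"
    hence "1 \<le> i" "i < n" using J by (auto simp: Suc_le_eq) (metis gr0I)
    thus "y ! i \<le> x ! i" using st unfolding struct_def by blast
  qed
  thus ?thesis using tot sx sy by linarith
qed

lemma top_full:
  fixes z :: "real list"
  assumes "length z \<le> m"
  shows "top m z = sum_list z"
proof -
  have "take m (rev (sort z)) = rev (sort z)" using assms by simp
  moreover have "sum_list (rev (sort z)) = sum_list z"
    by (metis mset_rev mset_sort sum_mset_sum_list)
  ultimately show ?thesis unfolding top_def by simp
qed

lemma struct_maj: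
  assumes st: "struct x y n"
  shows "majorized x y"
proof -
  have lx: "length x = n" and ly: "length y = n" and sxy: "sum_list x = sum_list y"
    using st unfolding struct_def by auto
  have "top m x \<le> top m y" for m
  proof (cases "n \<le> m")
    case True
    thus ?thesis using top_full lx ly sxy by simp
  next
    case False
    then obtain I where I: "I \<subseteq> {..<n}" "card I = m" and tI: "top m x = (\<Sum>i\<in>I. x ! i)"
      using top_attained[of m x] lx by auto
    have fI: "finite I" using I finite_subset by blast
    show ?thesis
    proof (cases "0 \<in> I")
      case True
      have "top m x \<le> (\<Sum>i\<in>I. y ! i)" using tI struct_G[OF st I(1) True] by simp
      also have "\<dots> \<le> top m y" by (rule top_ge) (use I ly in auto)
      finally show ?thesis .
    next
      case n0: False
      show ?thesis
      proof (cases "I = {}")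
        case True
        hence "m = 0" using I by simp
        have "(\<Sum>i\<in>{}. y ! i) \<le> top m y" by (rule top_ge) (use \<open>m = 0\<close> in auto)
        thus ?thesis using tI True by simp
      next
        case False
        then obtain k0 where k0: "k0 \<in> I" by blast
        have k0b: "1 \<le> k0" "k0 < n" using k0 n0 I by (auto simp: Suc_le_eq) (metis gr0I)
        define J where "J = insert 0 (I - {k0})"
        have J: "J \<subseteq> {..<n}" "0 \<in> J" unfolding J_def using I k0b by auto
        have c1: "card (I - {k0}) = m - 1" using card_Diff_singleton[OF k0] I(2) by simp
        have "card I > 0" using fI k0 by (auto simp: card_gt_0_iff)
        hence mpos: "m \<ge> 1" using I(2) by linarith
        have fI': "finite (I - {k0})" using fI by simp
        have "0 \<notin> I - {k0}" using n0 by simp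
        hence "card J = Suc (card (I - {k0}))" unfolding J_def using card_insert_disjoint[OF fI'] by simp
        hence cJ: "card J = m" using c1 mpos by simp
        have "(\<Sum>i\<in>J. x ! i) = x ! 0 + ((\<Sum>i\<in>I. x ! i) - x ! k0)"
          unfolding J_def using fI k0 n0 by (simp add: sum_diff1)
        moreover have "x ! k0 \<le> x ! 0" using st k0b unfolding struct_def by blast
        ultimately have "top m x \<le> (\<Sum>i\<in>J. x ! i)" using tI by simp
        also have "\<dots> \<le> (\<Sum>i\<in>J. y ! i)" by (rule struct_G[OF st J])
        also have "\<dots> \<le> top m y" by (rule top_ge) (use J cJ ly in auto)
        finally show ?thesis .
      qed
    qed
  qed
  thus ?thesis unfolding majorized_def top_def using lx ly sxy by simp
qed

lemma chord:
  fixes f :: "real \<Rightarrow> real"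
  assumes f: "convex_on I f" and I: "a \<in> I" "dd \<in> I" and o: "a < b" "b \<le> c" "c < dd"
  shows "(f b - f a) / (b - a) \<le> (f dd - f c) / (dd - c)"
proof -
  have 1: "(f a - f b) / (a - b) \<le> (f a - f dd) / (a - dd)"
    using convex_on_slope_le(1)[OF f I, of b] o by simp
  have 2: "(f a - f dd) / (a - dd) \<le> (f c - f dd) / (c - dd)"
    using convex_on_slope_le(2)[OF f I, of c] o by simp
  have e1: "(f a - f b) / (a - b) = (f b - f a) / (b - a)"
    using minus_divide_divide[of "f b - f a" "b - a"] by (simp only: minus_diff_eq)
  have e2: "(f c - f dd) / (c - dd) = (f dd - f c) / (dd - c)"
    using minus_divide_divide[of "f dd - f c" "dd - c"] by (simp only: minus_diff_eq)
  show ?thesis using 1 2 e1 e2 by linarith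
qed

lemma struct_conv:
  fixes f :: "real \<Rightarrow> real"
  assumes st: "struct x y n" and f: "convex_on {0..} f"
  shows "sum_list (map f x) \<le> sum_list (map f y)"
proof -
  have lx: "length x = n" and ly: "length y = n" and n1: "n \<ge> 1" and sxy: "sum_list x = sum_list y"
    and nn: "\<And>k. k < n \<Longrightarrow> 0 \<le> y ! k \<and> 0 \<le> x ! k"
    and le: "\<And>k. 1 \<le> k \<Longrightarrow> k < n \<Longrightarrow> y ! k \<le> x ! k \<and> x ! k \<le> x ! 0"
    using st unfolding struct_def by auto
  define S where "S = {..<n} - {0}"
  have S: "k \<in> S \<longleftrightarrow> 1 \<le> k \<and> k < n" for k unfolding S_def by auto
  have n0: "0 \<in> {..<n}" using n1 by simp
  have split: "(\<Sum>i<n. g i) = g 0 + (\<Sum>i\<in>S. g i)" for g :: "nat \<Rightarrow> real"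
    unfolding S_def using sum.remove[OF finite_lessThan n0] by simp
  have sl: "sum_list (map g z) = (\<Sum>i<n. g (z ! i))" if "length z = n" for g and z :: "real list"
    using that by (simp add: sum_list_sum_nth atLeast0LessThan)
  define D where "D = (\<Sum>k\<in>S. x ! k - y ! k)"
  have D0: "D \<ge> 0" unfolding D_def by (rule sum_nonneg) (use le S in auto)
  have y0: "y ! 0 = x ! 0 + D"
  proof -
    have "(\<Sum>i<n. x ! i) = (\<Sum>i<n. y ! i)" using sl[OF lx, of id] sl[OF ly, of id] sxy by simp
    thus ?thesis unfolding split D_def by (simp add: sum_subtractf)
  qed
  have main: "(\<Sum>k\<in>S. f (x ! k) - f (y ! k)) \<le> f (y ! 0) - f (x ! 0)"
  proof (cases "D = 0")
    case True
    have "\<forall>k\<in>S. x ! k - y ! k = 0"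
      using True unfolding D_def by (subst sum_nonneg_eq_0_iff[symmetric]) (use le S S_def in auto)
    thus ?thesis using y0 True by simp
  next
    case False
    hence Dp: "D > 0" using D0 by simp
    define m where "m = (f (y ! 0) - f (x ! 0)) / D"
    have "f (x ! k) - f (y ! k) \<le> m * (x ! k - y ! k)" if k: "k \<in> S" for k
    proof (cases "x ! k = y ! k")
      case True thus ?thesis by simp
    next
      case False
      hence lt: "y ! k < x ! k" using le k S by force
      have "(f (x ! k) - f (y ! k)) / (x ! k - y ! k) \<le> (f (y ! 0) - f (x ! 0)) / (y ! 0 - x ! 0)"
        by (rule chord[OF f]) (use nn le k S lt y0 Dp n1 in auto)
      hence "(f (x ! k) - f (y ! k)) / (x ! k - y ! k) \<le> m" unfolding m_def using y0 by simp
      thus ?thesis using lt by (simp add: divide_le_eq mult.commute)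
    qed
    hence "(\<Sum>k\<in>S. f (x ! k) - f (y ! k)) \<le> (\<Sum>k\<in>S. m * (x ! k - y ! k))" by (rule sum_mono)
    also have "\<dots> = m * D" unfolding D_def by (simp add: sum_distrib_left)
    also have "\<dots> = f (y ! 0) - f (x ! 0)" unfolding m_def using Dp by simp
    finally show ?thesis .
  qed
  have "sum_list (map f x) = f (x ! 0) + (\<Sum>k\<in>S. f (x ! k))" using sl[OF lx, of f] split[of "\<lambda>i. f (x ! i)"] by simp
  moreover have "sum_list (map f y) = f (y ! 0) + (\<Sum>k\<in>S. f (y ! k))" using sl[OF ly, of f] split[of "\<lambda>i. f (y ! i)"] by simp
  ultimately show ?thesis using main by (simp add: sum_subtractf)
qed



lemma convex_extend0:
  fixes f :: "real \<Rightarrow> real"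
  assumes cv: "convex_on {0<..} f" and f0: "f 0 = 0"
    and sc: "\<And>t y. 0 \<le> t \<Longrightarrow> t \<le> 1 \<Longrightarrow> 0 \<le> y \<Longrightarrow> f (t * y) \<le> t * f y"
  shows "convex_on {0..} f"
proof (rule convex_onI)
  fix t x y :: real assume t: "0 < t" "t < 1" and x: "x \<in> {0..}" and y: "y \<in> {0..}"
  show "f ((1 - t) *\<^sub>R x + t *\<^sub>R y) \<le> (1 - t) * f x + t * f y"
  proof (cases "x = 0")
    case True thus ?thesis using sc[of t y] t y f0 by simp
  next
    case xn: False
    show ?thesis
    proof (cases "y = 0")
      case True thus ?thesis using sc[of "1 - t" x] t x f0 by simp
    next
      case False
      thus ?thesis using convex_onD[OF cv, of t x y] xn x y t by simp
    qed
  qed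
qed (simp add: convex_real_interval)

lemma cv_powr:
  assumes p: "p \<ge> 1" shows "convex_on {0..} (\<lambda>t::real. t powr p)"
proof (rule convex_extend0[OF powr_convex[OF p]])
  fix t y :: real assume t: "0 \<le> t" "t \<le> 1" and y: "0 \<le> y"
  have "t powr p \<le> t powr 1" by (rule powr_mono') (use p t in auto)
  hence "t powr p * y powr p \<le> t * y powr p" using t by (intro mult_right_mono) auto
  thus "(t * y) powr p \<le> t * y powr p" using t y by (simp add: powr_mult)
qed simp

lemma cv_negpowr:
  assumes p: "0 < p" "p < 1" shows "convex_on {0..} (\<lambda>t::real. - (t powr p))"
proof (rule convex_extend0)
  have "concave_on {0<..} (\<lambda>t::real. t powr p)"
  proof (rule f''_le0_imp_concave[where f' = "\<lambda>x. p * x powr (p - 1)" and f'' = "\<lambda>x. p * ((p - 1) * x powr (p - 1 - 1))"])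
    fix x :: real assume x: "x \<in> {0<..}"
    show "((\<lambda>t. t powr p) has_real_derivative p * x powr (p - 1)) (at x)"
      using has_real_derivative_powr[of x p] x by simp
    show "((\<lambda>x. p * x powr (p - 1)) has_real_derivative p * ((p - 1) * x powr (p - 1 - 1))) (at x)"
      using DERIV_cmult[OF has_real_derivative_powr[of x "p - 1"], of p] x by simp
    have "(p - 1) * x powr (p - 1 - 1) \<le> 0" using p x by (simp add: mult_nonpos_nonneg)
    thus "p * ((p - 1) * x powr (p - 1 - 1)) \<le> 0" using p by (simp add: mult_nonneg_nonpos)
  qed simp
  thus "convex_on {0<..} (\<lambda>t::real. - (t powr p))" by (simp add: concave_on_def)
next
  fix t y :: real assume t: "0 \<le> t" "t \<le> 1" and y: "0 \<le> y"
  have "t powr 1 \<le> t powr p" by (rule powr_mono') (use p t in auto)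
  hence "t * y powr p \<le> t powr p * y powr p" using t by (intro mult_right_mono) auto
  thus "- ((t * y) powr p) \<le> t * - (y powr p)" using t y by (simp add: powr_mult)
qed simp

lemma cv_xlnx: "convex_on {0..} (\<lambda>t::real. t * ln t)"
proof (rule convex_extend0)
  show "convex_on {0<..} (\<lambda>t::real. t * ln t)"
    by (rule f''_ge0_imp_convex[where f' = "\<lambda>x. ln x + 1" and f'' = "\<lambda>x. 1 / x"])
      (auto intro!: derivative_eq_intros simp: field_simps)
next
  fix t y :: real assume t: "0 \<le> t" "t \<le> 1" and y: "0 \<le> y"
  show "t * y * ln (t * y) \<le> t * (y * ln y)"
  proof (cases "t = 0 \<or> y = 0")
    case True thus ?thesis by auto
  next
    case False
    hence tp: "t > 0" and yp: "y > 0" using t y by auto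
    have "ln t \<le> 0" using t tp by simp
    hence "t * y * ln t \<le> 0" using tp yp by (simp add: mult_nonneg_nonpos)
    thus ?thesis using tp yp by (simp add: ln_mult algebra_simps)
  qed
qed simp



lemma incr_nth: "k < d \<Longrightarrow> incr_vec d f ! k = (if k = 0 then f 1 else f (k + 1) - f k)"
  unfolding incr_vec_def by simp

lemma incr_len: "length (incr_vec d f) = d"
  unfolding incr_vec_def by simp

lemma incr_sum: "sum_list (incr_vec (Suc n) f) = f (Suc n)"
proof (induction n)
  case 0 thus ?case unfolding incr_vec_def by simp
next
  case (Suc n)
  have "incr_vec (Suc (Suc n)) f = incr_vec (Suc n) f @ [f (Suc n + 1) - f (Suc n)]"
    unfolding incr_vec_def by simp
  thus ?case using Suc by simp
qed

lemma sum_list_neg: "sum_list (map (\<lambda>t. - g t) z) = - sum_list (map (g :: real \<Rightarrow> real) (z::real list))"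
  by (induct z) auto

lemma powr_sum_pos:
  fixes z :: "real list"
  assumes nn: "\<And>k. k < length z \<Longrightarrow> 0 \<le> z ! k" and s: "sum_list z = 1"
  shows "sum_list (map (\<lambda>t. t powr a) z) > 0"
proof -
  have "\<exists>k<length z. z ! k > 0"
  proof (rule ccontr)
    assume "\<not> ?thesis"
    hence "\<forall>k<length z. z ! k = 0" using nn by force
    hence "sum_list z = 0" by (simp add: sum_list_sum_nth)
    thus False using s by simp
  qed
  then obtain k where k: "k < length z" "z ! k > 0" by blast
  have "sum_list (map (\<lambda>t. t powr a) z) = (\<Sum>i\<in>{0..<length z}. z ! i powr a)"
    by (simp add: sum_list_sum_nth)
  also have "\<dots> \<ge> z ! k powr a"
    by (rule member_le_sum) (use k in auto)
  moreover have "z ! k powr a > 0" using k by simp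
  ultimately show ?thesis by linarith
qed

theorem mainTheorem6:
  fixes d :: nat and U :: "nat \<Rightarrow> nat \<Rightarrow> complex"
  assumes "unitary_mat d U"
  shows "majorized (incr_vec d (s_val d U)) (incr_vec d (R_val d U))
    \<and> (\<forall>a::real. a > 0 \<longrightarrow>
          renyi a (incr_vec d (s_val d U)) \<ge> renyi a (incr_vec d (R_val d U)))
    \<and> shannon (incr_vec d (s_val d U)) \<ge> shannon (incr_vec d (R_val d U))"
proof (cases "d = 0")
  case True
  thus ?thesis unfolding incr_vec_def majorized_def renyi_def shannon_def by simp
next
  case False
  hence d1: "d \<ge> 1" by simp
  note U = assms
  define s where "s = s_val d U"
  define f :: "real \<Rightarrow> real" where "f t = ((1 + t) / 2)\<^sup>2" for t
  have Rv: "R_val d U = (\<lambda>k. f (s k))" unfolding R_val_def f_def s_def by auto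
  define W where "W = incr_vec d s"
  define Q where "Q = incr_vec d (\<lambda>k. f (s k))"
  have sn: "0 \<le> s k" "s k \<le> 1" if "1 \<le> k" "k \<le> d" for k
    unfolding s_def using s_nonneg[OF U that] s_le1[OF U that] by auto
  have smono: "s k \<le> s (Suc k)" if "1 \<le> k" "k < d" for k
    unfolding s_def using s_mono[OF U that] .
  have sstep: "s (Suc k) - s k \<le> s 1" if "1 \<le> k" "k < d" for k
    unfolding s_def using s_step[OF U that] by simp
  have stop: "s d = 1" unfolding s_def using s_top[OF U d1] .
  have fmono: "f a \<le> f b" if "0 \<le> a" "a \<le> b" for a b
    unfolding f_def using that by (intro power_mono) auto
  have fdiff: "f b - f a \<le> b - a" if "0 \<le> a" "a \<le> b" "b \<le> 1" for a b
  proof -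
    have "f b - f a = (b - a) * ((2 + a + b) / 4)" unfolding f_def by (simp add: power2_eq_square field_simps)
    also have "\<dots> \<le> (b - a) * 1" using that by (intro mult_left_mono) auto
    finally show ?thesis by simp
  qed
  have Wn: "W ! k = (if k = 0 then s 1 else s (k + 1) - s k)" if "k < d" for k
    unfolding W_def using incr_nth[OF that] .
  have Qn: "Q ! k = (if k = 0 then f (s 1) else f (s (k + 1)) - f (s k))" if "k < d" for k
    unfolding Q_def using incr_nth[OF that] .
  have L: "length W = d" "length Q = d" unfolding W_def Q_def by (simp_all add: incr_len)
  have P1: "0 \<le> Q ! k \<and> 0 \<le> W ! k" if k: "k < d" for k
  proof
    show "0 \<le> Q ! k"
    proof (cases "k = 0")
      case True thus ?thesis using Qn k unfolding f_def by simp
    next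
      case False thus ?thesis using Qn[OF k] fmono[of "s k" "s (k+1)"] sn[of k] smono[of k] k by simp
    qed
    show "0 \<le> W ! k"
    proof (cases "k = 0")
      case True thus ?thesis using Wn k sn[of 1] d1 by simp
    next
      case False thus ?thesis using Wn[OF k] smono[of k] k by simp
    qed
  qed
  have P2: "Q ! k \<le> W ! k \<and> W ! k \<le> W ! 0" if k: "1 \<le> k \<and> k < d" for k
  proof -
    have "Q ! k = f (s (k + 1)) - f (s k)" "W ! k = s (k + 1) - s k" using Qn Wn k by auto
    moreover have "f (s (k + 1)) - f (s k) \<le> s (k + 1) - s k"
      using fdiff[of "s k" "s (k + 1)"] sn[of k] sn[of "k + 1"] smono[of k] k by simp
    moreover have "s (k + 1) - s k \<le> s 1" using sstep[of k] k by simp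
    moreover have "W ! 0 = s 1" using Wn d1 by simp
    ultimately show "Q ! k \<le> W ! k \<and> W ! k \<le> W ! 0" by simp
  qed
  have P3: "sum_list W = sum_list Q"
  proof -
    obtain n where n: "d = Suc n" using False not0_implies_Suc by blast
    have "sum_list W = s d" unfolding W_def n by (rule incr_sum)
    moreover have "sum_list Q = f (s d)" unfolding Q_def n by (rule incr_sum)
    ultimately show "sum_list W = sum_list Q" using stop unfolding f_def by simp
  qed
  have st: "struct W Q d" unfolding struct_def using L d1 P1 P2 P3 by blast
  have maj: "majorized W Q" by (rule struct_maj[OF st])
  have Wnn: "\<And>k. k < length W \<Longrightarrow> 0 \<le> W ! k" and Qnn: "\<And>k. k < length Q \<Longrightarrow> 0 \<le> Q ! k"
    using st unfolding struct_def by auto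
  have sW: "sum_list W = 1" unfolding W_def using incr_sum[of "d - 1" s] stop d1 by simp
  have sQ: "sum_list Q = 1" using st sW unfolding struct_def by simp
  have sha: "shannon W \<ge> shannon Q"
    using struct_conv[OF st cv_xlnx] unfolding shannon_def by simp
  have ren: "renyi a W \<ge> renyi a Q" if a: "a > 0" for a
  proof -
    have pW: "sum_list (map (\<lambda>t. t powr a) W) > 0" by (rule powr_sum_pos[OF Wnn sW])
    have pQ: "sum_list (map (\<lambda>t. t powr a) Q) > 0" by (rule powr_sum_pos[OF Qnn sQ])
    consider "a = 1" | "a > 1" | "a < 1" by linarith
    thus ?thesis
    proof cases
      case 1 thus ?thesis using sha unfolding renyi_def by simp
    next
      case 2
      have "sum_list (map (\<lambda>t. t powr a) W) \<le> sum_list (map (\<lambda>t. t powr a) Q)"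
        by (rule struct_conv[OF st cv_powr]) (use 2 in simp)
      hence "ln (sum_list (map (\<lambda>t. t powr a) W)) \<le> ln (sum_list (map (\<lambda>t. t powr a) Q))"
        using pW pQ by simp
      moreover have "1 / (1 - a) < 0" using 2 by simp
      ultimately show ?thesis unfolding renyi_def using 2
        by (simp add: divide_right_mono_neg)
    next
      case 3
      have "sum_list (map (\<lambda>t. - (t powr a)) W) \<le> sum_list (map (\<lambda>t. - (t powr a)) Q)"
        by (rule struct_conv[OF st cv_negpowr]) (use 3 a in auto)
      hence "sum_list (map (\<lambda>t. t powr a) Q) \<le> sum_list (map (\<lambda>t. t powr a) W)"
        by (simp add: sum_list_neg)
      hence "ln (sum_list (map (\<lambda>t. t powr a) Q)) \<le> ln (sum_list (map (\<lambda>t. t powr a) W))"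
        using pW pQ by simp
      moreover have "1 / (1 - a) > 0" using 3 by simp
      ultimately show ?thesis unfolding renyi_def using 3
        by (simp add: divide_right_mono)
    qed
  qed
  show ?thesis using maj ren sha unfolding W_def Q_def s_def Rv by blast
qed


end
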